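(* Let $\mathcal{Y}$ be a linear subspace of $\mathbb{R}^n$ and let $\mathbf{L}\in\widehat{\mathcal{Y}}$ satisfy $\mathbf{L}(x)\preceq\mathbf{C}\odot\|x\|$ for all $x\in\mathcal{Y}$, where $\mathbf{C}$ is a closed bounded interval. Then $\|\mathbf{L}(x)\|_{I(\mathbb{R})}\le\|\mathbf{C}\|_{I(\mathbb{R})}\|x\|$ for all $x\in\mathcal{Y}$.
   Context: $I(\mathbb{R})$: nonempty compact intervals $\mathbf{A}=[\underline{a},\overline{a}]$; $\mathbf{A}\oplus\mathbf{B}=[\underline{a}+\underline{b},\overline{a}+\overline{b}]$; $\lambda\odot\mathbf{A}=[\min\{\lambda\underline{a},\lambda\overline{a}\},\max\{\lambda\underline{a},\lambda\overline{a}\}]$; $\mathbf{A}\ominus_{gH}\mathbf{B}=[\min\{\underline{a}-\underline{b},\overline{a}-\overline{b}\},\max\{\underline{a}-\underline{b},\overline{a}-\overline{b}\}]$; $\mathbf{A}\preceq\mathbf{B}$ iff $\underline{a}\le\underline{b}$ and $\overline{a}\le\overline{b}$; $\|\mathbf{A}\|_{I(\mathbb{R})}=\max\{|\underline{a}|,|\overline{a}|\}$; $\|\cdot\|$ is the Euclidean norm. An IVF $\mathbf{L}:\mathcal{Y}\to I(\mathbb{R})$ on a linear subspace is linear if (i) $\mathbf{L}(\lambda x)=\lambda\odot\mathbf{L}(x)$ for all $x\in\mathcal{Y}$, $\lambda\in\mathbb{R}$, and (ii) for all $x,y\in\mathcal{Y}$, either $\mathbf{L}(x)\oplus\mathbf{L}(y)=\mathbf{L}(x+y)$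 or neither of $\mathbf{L}(x)\oplus\mathbf{L}(y)$ and $\mathbf{L}(x+y)$ dominates the other w.r.t. $\preceq$. It is $gH$-continuous if $\lim_{\|d\|\to0}(\mathbf{L}(x+d)\ominus_{gH}\mathbf{L}(x))=\mathbf{0}$ at every $x$. $\widehat{\mathcal{Y}}$ denotes the set of all $gH$-continuous linear IVFs on $\mathcal{Y}$. *)

theory Defs
  imports "HOL-Analysis.Analysis" "HOL-Library.Interval"
begin

text \<open>I(R): nonempty compact real intervals, the library type real interval
  (pairs (a,b) with a \<le> b, accessed via lower / upper).\<close>

definition iadd :: "real interval \<Rightarrow> real interval \<Rightarrow> real interval" where
  "iadd A B = Ivl (lower A + lower B) (upper A + upper B)"

definition ismul :: "real \<Rightarrow> real interval \<Rightarrow> real interval" where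
  "ismul l A = Ivl (min (l * lower A) (l * upper A)) (max (l * lower A) (l * upper A))"

definition igH :: "real interval \<Rightarrow> real interval \<Rightarrow> real interval" where
  "igH A B = Ivl (min (lower A - lower B) (upper A - upper B))
                 (max (lower A - lower B) (upper A - upper B))"

definition ile :: "real interval \<Rightarrow> real interval \<Rightarrow> bool" where
  "ile A B \<longleftrightarrow> lower A \<le> lower B \<and> upper A \<le> upper B"

definition inorm :: "real interval \<Rightarrow> real" where
  "inorm A = max \<bar>lower A\<bar> \<bar>upper A\<bar>"

definition linear_ivf :: "('a::real_vector) set \<Rightarrow> ('a \<Rightarrow> real interval) \<Rightarrow> bool" where
  "linear_ivf Y L \<longleftrightarrow>
     (\<forall>x\<in>Y. \<forall>l::real. L (l *\<^sub>R x) = ismul l (L x)) \<and>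
     (\<forall>x\<in>Y. \<forall>y\<in>Y. iadd (L x) (L y) = L (x + y) \<or>
        (\<not> ile (iadd (L x) (L y)) (L (x + y)) \<and> \<not> ile (L (x + y)) (iadd (L x) (L y))))"

text \<open>gH-continuity on Y: L(x+d) \<ominus>gH L(x) \<rightarrow> 0 as d \<rightarrow> 0 (with x+d in Y);
  convergence of intervals to 0 means its interval norm tends to 0.\<close>
definition gH_continuous_on :: "('a::real_normed_vector) set \<Rightarrow> ('a \<Rightarrow> real interval) \<Rightarrow> bool" where
  "gH_continuous_on Y L \<longleftrightarrow>
     (\<forall>x\<in>Y. ((\<lambda>d. inorm (igH (L (x + d)) (L x))) \<longlongrightarrow> 0) (at 0 within {d. x + d \<in> Y}))"

end

theory Submission
  imports Defs
begin

lemma lower_Ivl': "lower (Ivl a (b::real)) = min a b"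
  by (simp add: lower.rep_eq Ivl.rep_eq)

lemma upper_Ivl': "upper (Ivl a (b::real)) = b"
  by (simp add: upper.rep_eq Ivl.rep_eq)

lemma lu: "lower (A::real interval) \<le> upper A"
  by (simp add: lower_le_upper)

theorem mainTheorem3:
  fixes Y :: "(real ^ 'n) set" and L :: "real ^ 'n \<Rightarrow> real interval" and C :: "real interval"
  assumes "subspace Y"
    and "linear_ivf Y L"
    and "gH_continuous_on Y L"
    and "\<forall>x\<in>Y. ile (L x) (ismul (norm x) C)"
  shows "\<forall>x\<in>Y. inorm (L x) \<le> inorm C * norm x"
proof
  fix x assume x: "x \<in> Y"
  have mx: "(-1) *\<^sub>R x \<in> Y" using assms(1) x by (simp add: subspace_neg)
  have neg: "L ((-1) *\<^sub>R x) = ismul (-1) (L x)"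
    using assms(2) x unfolding linear_ivf_def by blast
  have n0: "norm x \<ge> 0" by simp
  have lc: "lower C \<le> upper C" "lower (L x) \<le> upper (L x)" by (simp_all add: lu)
  have nm: "norm x * lower C \<le> norm x * upper C" using lc n0 by (simp add: mult_left_mono)
  have ms: "lower (ismul (norm x) C) = norm x * lower C" "upper (ismul (norm x) C) = norm x * upper C"
    using nm by (auto simp: ismul_def lower_Ivl' upper_Ivl' min_def max_def)
  have mn: "lower (ismul (-1) (L x)) = - upper (L x)" "upper (ismul (-1) (L x)) = - lower (L x)"
    using lc by (auto simp: ismul_def lower_Ivl' upper_Ivl')
  have h1: "lower (L x) \<le> norm x * lower C" "upper (L x) \<le> norm x * upper C"
    using assms(4) x ms unfolding ile_def by auto
  have h2: "- upper (L x) \<le> norm x * lower C" "- lower (L x) \<le> norm x * upper C"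
    using assms(4) mx ms neg mn unfolding ile_def by (auto simp: ismul_def[symmetric])
  have a: "norm x * \<bar>lower C\<bar> \<le> norm x * inorm C" "norm x * \<bar>upper C\<bar> \<le> norm x * inorm C"
    using n0 by (auto simp: inorm_def intro!: mult_left_mono)
  have b: "norm x * lower C \<le> norm x * \<bar>lower C\<bar>" "norm x * upper C \<le> norm x * \<bar>upper C\<bar>"
    "- (norm x * lower C) \<le> norm x * \<bar>lower C\<bar>" "- (norm x * upper C) \<le> norm x * \<bar>upper C\<bar>"
    using n0 mult_left_mono[of "- lower C" "\<bar>lower C\<bar>" "norm x"]
      mult_left_mono[of "- upper C" "\<bar>upper C\<bar>" "norm x"]
      mult_left_mono[of "lower C" "\<bar>lower C\<bar>" "norm x"]
      mult_left_mono[of "upper C" "\<bar>upper C\<bar>" "norm x"] by auto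
  show "inorm (L x) \<le> inorm C * norm x"
    unfolding inorm_def[of "L x"] using h1 h2 a b lc by (auto simp: mult.commute)
qed

end
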